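(* Let $K$ be a field and $\nu$ a valuation on $K[x]$. Every key polynomial for $\nu$ is irreducible in $K[x]$.
   Context: $\nu:K[x]\to\Gamma\cup\{\infty\}$ is a valuation ($\Gamma$ an ordered abelian group) with $\nu(f)=\infty$ only for $f=0$; $\Gamma'=\Gamma\otimes\mathbb{Q}$. For $k\in\mathbb{N}$, $\partial_kf=\frac{1}{k!}\frac{d^kf}{dx^k}$. For nonconstant $f$, $\epsilon(f)=\max\{(\nu(f)-\nu(\partial_kf))/k\mid 1\le k\le\deg f,\ \partial_kf\ne0\}\in\Gamma'$. A key polynomial is a monic nonconstant $Q\in K[x]$ such that every nonconstant $f\in K[x]$ with $\epsilon(f)\ge\epsilon(Q)$ satisfies $\deg f\ge\deg Q$. *)

theory Defs
  imports "HOL-Computational_Algebra.Polynomial"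
begin

text \<open>We represent nu by its values on nonzero polynomials; the value at 0 (infinity) is never used
  below, since only nonzero arguments occur.\<close>
definition valuation :: "('a::field poly \<Rightarrow> 'g::linordered_ab_group_add) \<Rightarrow> bool" where
  "valuation \<nu> \<longleftrightarrow>
     (\<forall>f g. f \<noteq> 0 \<longrightarrow> g \<noteq> 0 \<longrightarrow> \<nu> (f * g) = \<nu> f + \<nu> g) \<and>
     (\<forall>f g. f \<noteq> 0 \<longrightarrow> g \<noteq> 0 \<longrightarrow> f + g \<noteq> 0 \<longrightarrow> min (\<nu> f) (\<nu> g) \<le> \<nu> (f + g))"

text \<open>Hasse derivative: partial_k f = (1/k!) d^k f / dx^k (characteristic-free form).\<close>
definition hasse_deriv :: "nat \<Rightarrow> 'a::comm_ring_1 poly \<Rightarrow> 'a poly" where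
  "hasse_deriv k f = Abs_poly (\<lambda>i. of_nat ((i + k) choose k) * coeff f (i + k))"

definition nsmul :: "nat \<Rightarrow> 'g::ab_group_add \<Rightarrow> 'g" where
  "nsmul n a = (\<Sum>_<n. a)"

text \<open>Elements of Gamma' = Gamma (x) Q represented as fractions (g, k) meaning g/k with k > 0;
  since Gamma is torsion-free, (g,k) <= (h,l) iff l*g <= k*h in Gamma.\<close>
definition frac_le :: "'g::linordered_ab_group_add \<times> nat \<Rightarrow> 'g \<times> nat \<Rightarrow> bool" where
  "frac_le p q \<longleftrightarrow> nsmul (snd q) (fst p) \<le> nsmul (snd p) (fst q)"

text \<open>The candidate values (nu f - nu (partial_k f)) / k whose maximum is epsilon(f).\<close>
definition eps_cands :: "('a::field poly \<Rightarrow> 'g::linordered_ab_group_add) \<Rightarrow> 'a poly \<Rightarrow> ('g \<times> nat) set" where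
  "eps_cands \<nu> f = {(\<nu> f - \<nu> (hasse_deriv k f), k) | k. 1 \<le> k \<and> k \<le> degree f \<and> hasse_deriv k f \<noteq> 0}"

definition eps_le :: "('a::field poly \<Rightarrow> 'g::linordered_ab_group_add) \<Rightarrow> 'a poly \<Rightarrow> 'a poly \<Rightarrow> bool" where
  "eps_le \<nu> g f \<longleftrightarrow> (\<exists>p\<in>eps_cands \<nu> f. \<forall>q\<in>eps_cands \<nu> g. frac_le q p)"

definition key_polynomial :: "('a::field poly \<Rightarrow> 'g::linordered_ab_group_add) \<Rightarrow> 'a poly \<Rightarrow> bool" where
  "key_polynomial \<nu> Q \<longleftrightarrow> lead_coeff Q = 1 \<and> degree Q \<ge> 1 \<and>
     (\<forall>f. degree f \<ge> 1 \<longrightarrow> eps_le \<nu> Q f \<longrightarrow> degree f \<ge> degree Q)"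

end

theory Submission
  imports Defs
begin

lemma nsmul_0 [simp]: "nsmul 0 a = 0" by (simp add: nsmul_def)
lemma nsmul_Suc: "nsmul (Suc n) a = a + nsmul n a" by (simp add: nsmul_def)
lemma nsmul_zero [simp]: "nsmul n 0 = 0" by (simp add: nsmul_def)

lemma nsmul_add_left: "nsmul (m + n) a = nsmul m a + nsmul n a"
  by (induction m) (simp_all add: nsmul_Suc add.assoc)

lemma nsmul_add_right: "nsmul n (a + b) = nsmul n a + nsmul n b"
  by (simp add: nsmul_def sum.distrib)

lemma nsmul_mult: "nsmul (m * n) a = nsmul m (nsmul n a)"
  by (induction m) (simp_all add: nsmul_Suc nsmul_add_left)

lemma nsmul_comm: "nsmul m (nsmul l a) = nsmul l (nsmul m a)"
  by (metis nsmul_mult mult.commute)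

lemma nsmul_mono: "(a::'g::linordered_ab_group_add) \<le> b \<Longrightarrow> nsmul n a \<le> nsmul n b"
  by (induction n) (simp_all add: nsmul_Suc add_mono)

lemma nsmul_strict: "(a::'g::linordered_ab_group_add) < b \<Longrightarrow> 0 < n \<Longrightarrow> nsmul n a < nsmul n b"
proof (induction n)
  case 0 then show ?case by simp
next
  case (Suc n)
  show ?case
  proof (cases "n = 0")
    case True then show ?thesis using Suc by (simp add: nsmul_Suc)
  next
    case False then show ?thesis using Suc by (simp add: nsmul_Suc add_strict_mono)
  qed
qed

lemma nsmul_cancel: "nsmul l (a::'g::linordered_ab_group_add) \<le> nsmul l b \<Longrightarrow> 0 < l \<Longrightarrow> a \<le> b"
  using nsmul_strict[of b a l] by (metis not_le)

lemma frac_le_refl: "frac_le p p" by (simp add: frac_le_def)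

lemma frac_le_trans:
  assumes "frac_le (x, k) (y, l)" "frac_le (y, l) (z::'g::linordered_ab_group_add, m)" "0 < l"
  shows "frac_le (x, k) (z, m)"
proof -
  have 1: "nsmul l x \<le> nsmul k y" "nsmul m y \<le> nsmul l z" using assms by (auto simp: frac_le_def)
  have "nsmul l (nsmul m x) = nsmul m (nsmul l x)" by (rule nsmul_comm)
  also have "\<dots> \<le> nsmul m (nsmul k y)" using 1 by (intro nsmul_mono)
  also have "\<dots> = nsmul k (nsmul m y)" by (rule nsmul_comm)
  also have "\<dots> \<le> nsmul k (nsmul l z)" using 1 by (intro nsmul_mono)
  also have "\<dots> = nsmul l (nsmul k z)" by (rule nsmul_comm)
  finally have "nsmul m x \<le> nsmul k z" using assms(3) by (rule nsmul_cancel)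
  then show ?thesis by (simp add: frac_le_def)
qed

lemma frac_max:
  fixes S :: "('g::linordered_ab_group_add \<times> nat) set"
  assumes "finite S" "S \<noteq> {}" "\<forall>p\<in>S. 0 < snd p"
  shows "\<exists>p\<in>S. \<forall>q\<in>S. frac_le q p"
  using assms
proof (induction S rule: finite_ne_induct)
  case (singleton x) then show ?case by (simp add: frac_le_refl)
next
  case (insert x S)
  then obtain p where p: "p \<in> S" "\<forall>q\<in>S. frac_le q p" by auto
  show ?case
  proof (cases "frac_le x p")
    case True then show ?thesis using p by (auto simp: frac_le_refl)
  next
    case False
    then have px: "frac_le p x" by (auto simp: frac_le_def)
    have "\<forall>q\<in>S. frac_le q x"
    proof
      fix q assume "q \<in> S"
      then have "frac_le q p" using p by auto
      moreover have "0 < snd p" using insert p by auto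
      ultimately show "frac_le q x" using px frac_le_trans[of "fst q" "snd q" "fst p" "snd p" "fst x" "snd x"]
        by simp
    qed
    then show ?thesis by (auto simp: frac_le_refl)
  qed
qed

section \<open>Hasse derivatives\<close>

lemma coeff_hasse: "coeff (hasse_deriv k f) i = of_nat ((i + k) choose k) * coeff f (i + k)"
proof -
  have "coeff (hasse_deriv k f) = (\<lambda>i. of_nat ((i + k) choose k) * coeff f (i + k))"
    unfolding hasse_deriv_def by (rule coeff_Abs_poly[where n = "degree f"]) (simp add: coeff_eq_0)
  then show ?thesis by simp
qed

lemma hasse_0 [simp]: "hasse_deriv 0 f = f"
  by (rule poly_eqI) (simp add: coeff_hasse)

lemma hasse_zero [simp]: "hasse_deriv k 0 = 0"
  by (rule poly_eqI) (simp add: coeff_hasse)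

lemma hasse_gt: "degree f < k \<Longrightarrow> hasse_deriv k f = 0"
  by (rule poly_eqI) (simp add: coeff_hasse coeff_eq_0)

lemma hasse_deg: "(f::'a::field poly) \<noteq> 0 \<Longrightarrow> hasse_deriv (degree f) f \<noteq> 0"
proof
  assume "f \<noteq> 0" "hasse_deriv (degree f) f = 0"
  then have "coeff (hasse_deriv (degree f) f) 0 = 0" by simp
  then show False using \<open>f \<noteq> 0\<close> by (simp add: coeff_hasse)
qed

lemma hasse_pCons:
  "hasse_deriv (Suc k) (pCons a f) = pCons 0 (hasse_deriv (Suc k) f) + hasse_deriv k f"
proof (rule poly_eqI)
  fix i
  show "coeff (hasse_deriv (Suc k) (pCons a f)) i =
        coeff (pCons 0 (hasse_deriv (Suc k) f) + hasse_deriv k f) i"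
  proof (cases i)
    case 0 then show ?thesis by (simp add: coeff_hasse)
  next
    case (Suc j)
    have "((Suc j + Suc k) choose (Suc k)) = ((j + Suc k) choose (Suc k)) + ((Suc j + k) choose k)"
      by simp
    then show ?thesis using Suc by (simp add: coeff_hasse coeff_pCons algebra_simps)
  qed
qed

definition YY :: "'a::comm_ring_1 poly poly" where "YY = [:[:0,1:], 1:]"
definition TT :: "'a::comm_ring_1 poly \<Rightarrow> 'a poly poly" where
  "TT f = pcompose (map_poly (\<lambda>c. [:c:]) f) YY"

lemma map_add_c: "map_poly (\<lambda>c. [:c:]) (p + q) = map_poly (\<lambda>c. [:c:]) p + map_poly (\<lambda>c. [:c:]) (q::'a::comm_ring_1 poly)"
  by (rule poly_eqI) (simp add: coeff_map_poly)

lemma map_smult_c: "map_poly (\<lambda>c. [:c:]) (smult a q) = smult [:a:] (map_poly (\<lambda>c. [:c:]) (q::'a::comm_ring_1 poly))"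
  by (rule poly_eqI) (simp add: coeff_map_poly)

lemma map_pCons_c: "map_poly (\<lambda>c. [:c:]) (pCons a q) = pCons [:a:] (map_poly (\<lambda>c. [:c:]) (q::'a::comm_ring_1 poly))"
  by (rule poly_eqI) (simp add: coeff_map_poly coeff_pCons split: nat.splits)

lemma map_const_mult:
  "map_poly (\<lambda>c. [:c:]) (p * q) = map_poly (\<lambda>c. [:c:]) p * map_poly (\<lambda>c. [:c:]) (q::'a::comm_ring_1 poly)"
proof (induction p)
  case 0 then show ?case by simp
next
  case (pCons a p)
  have "pCons a p * q = smult a q + pCons 0 (p * q)" by simp
  then have "map_poly (\<lambda>c. [:c:]) (pCons a p * q) =
     smult [:a:] (map_poly (\<lambda>c. [:c:]) q) + pCons 0 (map_poly (\<lambda>c. [:c:]) (p * q))"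
    by (simp only: map_add_c map_smult_c map_pCons_c) simp
  also have "\<dots> = map_poly (\<lambda>c. [:c:]) (pCons a p) * map_poly (\<lambda>c. [:c:]) q"
    using pCons(2) by (simp add: map_poly_pCons)
  finally show ?case .
qed

lemma TT_mult: "TT (f * g) = TT f * TT g"
  by (simp only: TT_def map_const_mult pcompose_mult)

lemma X_mult: "[:0,1:] * (p::'b::comm_ring_1 poly) = pCons 0 p"
  by simp

lemma TT_pCons: "TT (pCons a f) = [:[:a:]:] + YY * TT f"
  unfolding TT_def by (simp only: map_pCons_c pcompose_pCons)

lemma YY_mult: "YY * P = smult [:0,1:] P + pCons 0 (P :: 'a::comm_ring_1 poly poly)"
  by (simp add: YY_def)

lemma coeff_TT_pCons: "coeff (TT (pCons a f)) k = (if k = 0 then [:a:] else 0) + pCons 0 (coeff (TT f) k)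
     + (if k = 0 then 0 else coeff (TT f) (k - 1))"
proof -
  have "coeff (TT (pCons a f)) k = coeff [:[:a:]:] k + [:0,1:] * coeff (TT f) k + coeff (pCons 0 (TT f)) k"
    unfolding TT_pCons YY_mult by simp
  then show ?thesis by (cases k) (simp_all only: X_mult coeff_pCons_0 coeff_pCons_Suc, simp_all)
qed

lemma coeff_TT: "coeff (TT f) k = hasse_deriv k f"
proof (induction f arbitrary: k)
  case 0 then show ?case by (simp add: TT_def)
next
  case (pCons a f)
  have IH: "\<And>k. coeff (TT f) k = hasse_deriv k f" by (rule pCons.IH)
  show ?case
  proof (cases k)
    case 0
    have "coeff (TT (pCons a f)) k = [:a:] + pCons 0 f"
      using coeff_TT_pCons[of a f k] 0 IH[of 0] by simp
    also have "\<dots> = pCons a f" by simp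
    finally show ?thesis using 0 by simp
  next
    case (Suc j)
    have "coeff (TT (pCons a f)) k = pCons 0 (hasse_deriv (Suc j) f) + hasse_deriv j f"
      using coeff_TT_pCons[of a f k] Suc IH[of k] IH[of j] by simp
    then show ?thesis using Suc hasse_pCons[of j a f] by simp
  qed
qed

lemma hasse_mult: "hasse_deriv k (f * g) = (\<Sum>i\<le>k. hasse_deriv i f * hasse_deriv (k - i) g)"
proof -
  have "hasse_deriv k (f * g) = coeff (TT f * TT g) k" by (simp only: coeff_TT[symmetric] TT_mult)
  also have "\<dots> = (\<Sum>i\<le>k. hasse_deriv i f * hasse_deriv (k - i) g)" by (simp only: coeff_mult coeff_TT)
  finally show ?thesis .
qed

section \<open>Valuations\<close>

lemma val_sum:
  assumes v: "valuation \<nu>" and "finite S" "sum F S \<noteq> (0::'a::field poly)"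
  shows "\<exists>i\<in>S. F i \<noteq> 0 \<and> (\<nu> (F i) :: 'g::linordered_ab_group_add) \<le> \<nu> (sum F S)"
  using assms(2,3)
proof (induction S rule: finite_induct)
  case empty then show ?case by simp
next
  case (insert x S)
  have s: "sum F (insert x S) = F x + sum F S" using insert by simp
  show ?case
  proof (cases "F x = 0")
    case True then show ?thesis using insert s by auto
  next
    case Fx: False
    show ?thesis
    proof (cases "sum F S = 0")
      case True then show ?thesis using Fx s by auto
    next
      case False
      then obtain i where i: "i \<in> S" "F i \<noteq> 0" "\<nu> (F i) \<le> \<nu> (sum F S)" using insert by auto
      have "min (\<nu> (F x)) (\<nu> (sum F S)) \<le> \<nu> (sum F (insert x S))"
        using v Fx False insert.prems s unfolding valuation_def by auto
      then show ?thesis using i Fx by (cases "\<nu> (F x) \<le> \<nu> (sum F S)") (auto simp: min_def)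
    qed
  qed
qed

lemma part_bound:
  assumes "\<forall>p\<in>eps_cands \<nu> f. frac_le p (m, n)" "hasse_deriv i f \<noteq> 0"
  shows "nsmul n (\<nu> f - \<nu> (hasse_deriv i f)) \<le> nsmul i (m::'g::linordered_ab_group_add)"
proof (cases "i = 0")
  case True then show ?thesis by simp
next
  case False
  have "i \<le> degree f" using assms(2) hasse_gt[of f i] by (auto simp: not_less[symmetric])
  then have "(\<nu> f - \<nu> (hasse_deriv i f), i) \<in> eps_cands \<nu> f"
    using False assms(2) unfolding eps_cands_def by auto
  then show ?thesis using assms(1) by (auto simp: frac_le_def)
qed

lemma cand_bound:
  fixes \<nu> :: "'a::field poly \<Rightarrow> 'g::linordered_ab_group_add"
  assumes v: "valuation \<nu>" and g: "g \<noteq> 0" and h: "h \<noteq> 0"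
    and bg: "\<forall>p\<in>eps_cands \<nu> g. frac_le p (m, n)"
    and bh: "\<forall>p\<in>eps_cands \<nu> h. frac_le p (m, n)"
    and q: "q \<in> eps_cands \<nu> (g * h)"
  shows "frac_le q (m, n)"
proof -
  obtain k where k: "q = (\<nu> (g * h) - \<nu> (hasse_deriv k (g * h)), k)" "1 \<le> k"
    "hasse_deriv k (g * h) \<noteq> 0"
    using q unfolding eps_cands_def by auto
  have "sum (\<lambda>i. hasse_deriv i g * hasse_deriv (k - i) h) {..k} \<noteq> 0"
    using k(3) hasse_mult by metis
  from val_sum[OF v _ this] obtain i where i: "i \<le> k"
    "hasse_deriv i g * hasse_deriv (k - i) h \<noteq> 0"
    "\<nu> (hasse_deriv i g * hasse_deriv (k - i) h) \<le> \<nu> (hasse_deriv k (g * h))"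
    by (auto simp: hasse_mult[symmetric])
  have gi: "hasse_deriv i g \<noteq> 0" and hi: "hasse_deriv (k - i) h \<noteq> 0" using i(2) by auto
  have vm: "\<nu> (hasse_deriv i g * hasse_deriv (k - i) h) = \<nu> (hasse_deriv i g) + \<nu> (hasse_deriv (k - i) h)"
    "\<nu> (g * h) = \<nu> g + \<nu> h" using v gi hi g h unfolding valuation_def by auto
  have le: "\<nu> (g * h) - \<nu> (hasse_deriv k (g * h)) \<le>
      (\<nu> g - \<nu> (hasse_deriv i g)) + (\<nu> h - \<nu> (hasse_deriv (k - i) h))"
    using i(3) vm by (simp add: algebra_simps)
  have "nsmul n (\<nu> (g * h) - \<nu> (hasse_deriv k (g * h))) \<le>
      nsmul n ((\<nu> g - \<nu> (hasse_deriv i g)) + (\<nu> h - \<nu> (hasse_deriv (k - i) h)))"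
    using le by (rule nsmul_mono)
  also have "\<dots> = nsmul n (\<nu> g - \<nu> (hasse_deriv i g)) + nsmul n (\<nu> h - \<nu> (hasse_deriv (k - i) h))"
    by (rule nsmul_add_right)
  also have "\<dots> \<le> nsmul i m + nsmul (k - i) m"
    using part_bound[OF bg gi] part_bound[OF bh hi] by (rule add_mono)
  also have "\<dots> = nsmul k m" using i(1) by (simp add: nsmul_add_left[symmetric])
  finally show ?thesis using k(1) by (simp add: frac_le_def)
qed

lemma cands_finite: "finite (eps_cands \<nu> f)"
proof -
  have "eps_cands \<nu> f \<subseteq> (\<lambda>k. (\<nu> f - \<nu> (hasse_deriv k f), k)) ` {..degree f}"
    unfolding eps_cands_def by auto
  then show ?thesis by (rule finite_subset) simp
qed

lemma cands_pos: "p \<in> eps_cands \<nu> f \<Longrightarrow> 0 < snd p"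
  unfolding eps_cands_def by auto

lemma cands_ne: "1 \<le> degree (f::'a::field poly) \<Longrightarrow> eps_cands \<nu> f \<noteq> {}"
proof -
  assume d: "1 \<le> degree f"
  then have "f \<noteq> 0" by auto
  then have "(\<nu> f - \<nu> (hasse_deriv (degree f) f), degree f) \<in> eps_cands \<nu> f"
    using d hasse_deg unfolding eps_cands_def by auto
  then show ?thesis by auto
qed

theorem corollary4p4:
  fixes \<nu> :: "'a::field poly \<Rightarrow> 'g::linordered_ab_group_add"
    and Q :: "'a poly"
  assumes "valuation \<nu>"
    and "key_polynomial \<nu> Q"
  shows "irreducible Q"
proof (rule irreducibleI)
  have kp: "lead_coeff Q = 1" "degree Q \<ge> 1"
    "\<And>f. degree f \<ge> 1 \<Longrightarrow> eps_le \<nu> Q f \<Longrightarrow> degree f \<ge> degree Q"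
    using assms(2) unfolding key_polynomial_def by auto
  show Q0: "Q \<noteq> 0" using kp by auto
  show "\<not> is_unit Q" using kp Q0 by (auto simp: is_unit_iff_degree)
  fix g h assume Qgh: "Q = g * h"
  show "is_unit g \<or> is_unit h"
  proof (rule ccontr)
    assume nu: "\<not> (is_unit g \<or> is_unit h)"
    have g: "g \<noteq> 0" and h: "h \<noteq> 0" using Q0 Qgh by auto
    have dg: "degree g \<ge> 1" using nu g by (auto simp: is_unit_iff_degree)
    have dh: "degree h \<ge> 1" using nu h by (auto simp: is_unit_iff_degree)
    have dQ: "degree Q = degree g + degree h" using Qgh g h by (simp add: degree_mult_eq)
    define S where "S = eps_cands \<nu> g \<union> eps_cands \<nu> h"
    have "finite S" "S \<noteq> {}" "\<forall>p\<in>S. 0 < snd p"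
      using cands_finite cands_ne[OF dg] cands_pos unfolding S_def by auto
    from frac_max[OF this] obtain M where M: "M \<in> S" "\<forall>q\<in>S. frac_le q M" by blast
    have all: "\<forall>q\<in>eps_cands \<nu> Q. frac_le q M"
    proof
      fix q assume "q \<in> eps_cands \<nu> Q"
      then show "frac_le q M"
        using cand_bound[OF assms(1) g h, of "fst M" "snd M" q] M Qgh unfolding S_def by auto
    qed
    show False
    proof (cases "M \<in> eps_cands \<nu> g")
      case True
      then have "eps_le \<nu> Q g" using all unfolding eps_le_def by auto
      then show False using kp(3)[OF dg] dQ dh by auto
    next
      case False
      then have "M \<in> eps_cands \<nu> h" using M unfolding S_def by auto
      then have "eps_le \<nu> Q h" using all unfolding eps_le_def by auto
      then show False using kp(3)[OF dh] dQ dg by auto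
    qed
  qed
qed

end
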